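(* Let $n,k$ be positive integers such that $n\ge 8k$, and let $i\in\{1,\ldots,n\}$. If $H\sim\text{Hyp}(n,i,k)$, then \[ \mathbb{P}\left(H \ge \mathbb{E}(H)\right) \,\ge\, \frac{k}{n}. \]
   Context: For positive integers $n\ge k$ and $i\in\{1,\ldots,n\}$, $\text{Hyp}(n,i,k)$ denotes the hypergeometric distribution: the number of black marbles in a sample without replacement of size $k$ from an urn with $i$ black and $n-i$ white marbles, i.e. $\mathbb{P}(H=j)=\binom{i}{j}\binom{n-i}{k-j}/\binom{n}{k}$ for $j\in\{\max\{0,k-(n-i)\},\ldots,\min\{k,i\}\}$. Its mean is $\mathbb{E}(H)=ik/n$. *)

theory Defs
  imports Complex_Main
begin

text \<open>Probability mass function of Hyp(n,i,k): number of black marbles in a sample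
  of size k drawn without replacement from an urn with i black and n - i white marbles.\<close>
definition hyp_pmf :: "nat \<Rightarrow> nat \<Rightarrow> nat \<Rightarrow> nat \<Rightarrow> real" where
  "hyp_pmf n i k j =
     (if j \<le> k then real ((i choose j) * ((n - i) choose (k - j))) / real (n choose k) else 0)"

definition hyp_mean :: "nat \<Rightarrow> nat \<Rightarrow> nat \<Rightarrow> real" where
  "hyp_mean n i k = real i * real k / real n"

definition hyp_prob_ge :: "nat \<Rightarrow> nat \<Rightarrow> nat \<Rightarrow> real \<Rightarrow> real" where
  "hyp_prob_ge n i k t = (\<Sum>j\<in>{j\<in>{0..k}. real j \<ge> t}. hyp_pmf n i k j)"

end

theory Submission
  imports Defs
begin


lemma hyp_nonneg: "hyp_pmf n i k j \<ge> 0"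
  unfolding hyp_pmf_def by simp

lemma hyp_above: "k < j \<Longrightarrow> hyp_pmf n i k j = 0"
  unfolding hyp_pmf_def by simp

lemma hyp_sum:
  assumes "i \<le> n" "k \<le> n"
  shows "(\<Sum>j\<le>k. hyp_pmf n i k j) = 1"
proof -
  have v: "(\<Sum>j\<le>k. (i choose j) * ((n - i) choose (k - j))) = n choose k"
    using vandermonde[where r=k and m=i and n="n - i"] assms by simp
  have pos: "real (n choose k) > 0" using assms by simp
  have "(\<Sum>j\<le>k. hyp_pmf n i k j) = (\<Sum>j\<le>k. real ((i choose j) * ((n - i) choose (k - j))) / real (n choose k))"
    by (rule sum.cong) (auto simp: hyp_pmf_def)
  also have "\<dots> = real (\<Sum>j\<le>k. (i choose j) * ((n - i) choose (k - j))) / real (n choose k)"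
    by (simp add: sum_divide_distrib)
  also have "\<dots> = 1" using v pos by simp
  finally show ?thesis .
qed

lemma choose_step_real:
  "real (a choose Suc j) * (real j + 1) = real (a choose j) * (real a - real j)"
proof (cases "j \<le> a")
  case True
  have "Suc j * (a choose Suc j) = a * ((a - 1) choose j)" by (rule binomial_absorption)
  moreover have "(a - j) * (a choose j) = a * ((a - 1) choose j)" by (rule binomial_absorb_comp)
  ultimately have "Suc j * (a choose Suc j) = (a - j) * (a choose j)" by simp
  hence "real (Suc j * (a choose Suc j)) = real ((a - j) * (a choose j))" by simp
  thus ?thesis using True by (simp add: of_nat_diff algebra_simps)
next
  case False
  thus ?thesis by (simp add: binomial_eq_0)
qed

lemma hyp_ratio:
  assumes "i \<le> n"
  shows "hyp_pmf n i k (Suc j) * (real j + 1) * (real n - real i - real k + real j + 1)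
         = hyp_pmf n i k j * (real i - real j) * (real k - real j)"
proof (cases "j < k")
  case True
  define N where "N = n - i"
  have RN: "real N = real n - real i" using assms by (simp add: N_def)
  define r where "r = k - Suc j"
  have kj: "k - j = Suc r" using True by (simp add: r_def)
  have Rr: "real r = real k - real j - 1" using True by (simp add: r_def of_nat_diff)
  have a: "real (i choose Suc j) * (real j + 1) = real (i choose j) * (real i - real j)"
    by (rule choose_step_real)
  have b: "real (N choose Suc r) * (real r + 1) = real (N choose r) * (real N - real r)"
    by (rule choose_step_real)
  have b': "real (N choose r) * (real n - real i - real k + real j + 1) = real (N choose (k - j)) * (real k - real j)"
    using b RN Rr kj by (simp add: algebra_simps)
  have "hyp_pmf n i k (Suc j) * (real j + 1) * (real n - real i - real k + real j + 1)
      = (real (i choose Suc j) * (real j + 1)) * (real (N choose r) * (real n - real i - real k + real j + 1)) / real (n choose k)"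
    using True by (simp add: hyp_pmf_def N_def r_def)
  also have "\<dots> = (real (i choose j) * (real i - real j)) * (real (N choose (k - j)) * (real k - real j)) / real (n choose k)"
    using a b' by simp
  also have "\<dots> = hyp_pmf n i k j * (real i - real j) * (real k - real j)"
    using True by (simp add: hyp_pmf_def N_def)
  finally show ?thesis .
next
  case False
  thus ?thesis by (cases "j = k") (simp_all add: hyp_pmf_def)
qed

lemma hyp_low_zero:
  assumes "i \<le> n" "real n - real i - real k + real j + 1 \<le> 0"
  shows "hyp_pmf n i k j = 0"
proof -
  have "n - i < k - j" using assms by linarith
  thus ?thesis by (simp add: hyp_pmf_def)
qed

lemma pairing:
  fixes n i k c :: nat
  defines "\<alpha> \<equiv> real i - real c + 1" and "\<beta> \<equiv> real k - real c + 1"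
      and "\<gamma> \<equiv> real c" and "\<delta> \<equiv> real n - real i - real k + real c"
  assumes iN: "i \<le> n" and c1: "1 \<le> c" and cK: "c \<le> k" and D0: "\<gamma> * \<delta> \<le> \<alpha> * \<beta>" and ag: "\<gamma> \<le> \<alpha>"
    and lc: "l \<le> c - 1"
    and good: "\<forall>u\<in>{1..l}. real u < \<delta> \<and> (\<gamma>\<^sup>2 - (real u)\<^sup>2) * (\<delta>\<^sup>2 - (real u)\<^sup>2) \<le> (\<alpha>\<^sup>2 - (real u)\<^sup>2) * (\<beta>\<^sup>2 - (real u)\<^sup>2)"
  shows "hyp_pmf n i k (c - 1 - l) \<le> hyp_pmf n i k (c + l)"
  using lc good
proof (induction l)
  case 0
  have r: "hyp_pmf n i k (Suc (c - 1)) * (real (c - 1) + 1) * (real n - real i - real k + real (c - 1) + 1)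
         = hyp_pmf n i k (c - 1) * (real i - real (c - 1)) * (real k - real (c - 1))"
    by (rule hyp_ratio[OF iN])
  have e1: "Suc (c - 1) = c" using c1 by simp
  have e2: "real (c - 1) = real c - 1" using c1 by (simp add: of_nat_diff)
  have r': "hyp_pmf n i k c * (\<gamma> * \<delta>) = hyp_pmf n i k (c - 1) * (\<alpha> * \<beta>)"
    using r unfolding e1 e2 \<alpha>_def \<beta>_def \<gamma>_def \<delta>_def by (simp add: algebra_simps)
  show ?case
  proof (cases "\<delta> \<le> 0")
    case True
    have "hyp_pmf n i k (c - 1) = 0"
      by (rule hyp_low_zero[OF iN]) (use True e2 in \<open>simp add: \<delta>_def\<close>)
    thus ?thesis using hyp_nonneg[of n i k c] by simp
  next
    case False
    have gd: "\<gamma> * \<delta> > 0" using False c1 by (simp add: \<gamma>_def)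
    have "hyp_pmf n i k (c - 1) * (\<gamma> * \<delta>) \<le> hyp_pmf n i k (c - 1) * (\<alpha> * \<beta>)"
      using D0 hyp_nonneg[of n i k "c - 1"] by (simp add: mult_left_mono)
    hence "hyp_pmf n i k (c - 1) * (\<gamma> * \<delta>) \<le> hyp_pmf n i k c * (\<gamma> * \<delta>)" using r' by simp
    hence "hyp_pmf n i k (c - 1) \<le> hyp_pmf n i k c" using gd by (rule mult_right_le_imp_le)
    thus ?thesis by simp
  qed
next
  case (Suc l)
  define u where "u = real (Suc l)"
  have lc': "Suc l \<le> c - 1" using Suc.prems by simp
  have IH: "hyp_pmf n i k (c - 1 - l) \<le> hyp_pmf n i k (c + l)"
    using Suc.IH Suc.prems by auto
  have gu: "u < \<delta>" and gineq: "(\<gamma>\<^sup>2 - u\<^sup>2) * (\<delta>\<^sup>2 - u\<^sup>2) \<le> (\<alpha>\<^sup>2 - u\<^sup>2) * (\<beta>\<^sup>2 - u\<^sup>2)"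
    using bspec[OF Suc.prems(2), of "Suc l"] unfolding u_def by auto
  have ug: "u < \<gamma>" using lc' c1 by (simp add: u_def \<gamma>_def)
  have u0: "u > 0" by (simp add: u_def)
  have rR: "hyp_pmf n i k (Suc (c + l)) * (real (c + l) + 1) * (real n - real i - real k + real (c + l) + 1)
         = hyp_pmf n i k (c + l) * (real i - real (c + l)) * (real k - real (c + l))"
    by (rule hyp_ratio[OF iN])
  have rR': "hyp_pmf n i k (c + Suc l) * ((\<gamma> + u) * (\<delta> + u)) = hyp_pmf n i k (c + l) * ((\<alpha> - u) * (\<beta> - u))"
    using rR unfolding \<alpha>_def \<beta>_def \<gamma>_def \<delta>_def u_def by (simp add: algebra_simps)
  have jl: "Suc (c - 1 - Suc l) = c - 1 - l" using lc' by simp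
  have rj: "real (c - 1 - Suc l) = real c - 1 - u" using lc' c1 by (simp add: of_nat_diff u_def)
  have rL: "hyp_pmf n i k (Suc (c - 1 - Suc l)) * (real (c - 1 - Suc l) + 1) * (real n - real i - real k + real (c - 1 - Suc l) + 1)
         = hyp_pmf n i k (c - 1 - Suc l) * (real i - real (c - 1 - Suc l)) * (real k - real (c - 1 - Suc l))"
    by (rule hyp_ratio[OF iN])
  have rL': "hyp_pmf n i k (c - 1 - l) * ((\<gamma> - u) * (\<delta> - u)) = hyp_pmf n i k (c - 1 - Suc l) * ((\<alpha> + u) * (\<beta> + u))"
    using rL unfolding jl rj \<alpha>_def \<beta>_def \<gamma>_def \<delta>_def by (simp add: algebra_simps)
  have pos1: "(\<gamma> - u) * (\<delta> - u) > 0" using ug gu by simp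
  have pos2: "(\<gamma> + u) * (\<delta> + u) > 0" using ug gu u0 by (simp add: add_pos_pos)
  have au: "\<alpha> - u > 0" using ag ug by simp
  have prodpos: "(\<gamma>\<^sup>2 - u\<^sup>2) * (\<delta>\<^sup>2 - u\<^sup>2) > 0"
  proof -
    have "\<gamma>\<^sup>2 - u\<^sup>2 = (\<gamma> - u) * (\<gamma> + u)" by (simp add: power2_eq_square algebra_simps)
    moreover have "\<delta>\<^sup>2 - u\<^sup>2 = (\<delta> - u) * (\<delta> + u)" by (simp add: power2_eq_square algebra_simps)
    ultimately show ?thesis using ug gu u0 by (simp add: mult_pos_pos)
  qed
  have b0: "\<beta> \<ge> 0" using cK by (simp add: \<beta>_def)
  have bu: "\<beta> - u \<ge> 0"
  proof (rule ccontr)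
    assume "\<not> \<beta> - u \<ge> 0"
    hence bl: "\<beta> < u" by simp
    have "\<alpha>\<^sup>2 - u\<^sup>2 = (\<alpha> - u) * (\<alpha> + u)" by (simp add: power2_eq_square algebra_simps)
    hence a2: "\<alpha>\<^sup>2 - u\<^sup>2 > 0" using au u0 by simp
    have "\<beta>\<^sup>2 - u\<^sup>2 = (\<beta> - u) * (\<beta> + u)" by (simp add: power2_eq_square algebra_simps)
    hence b2: "\<beta>\<^sup>2 - u\<^sup>2 < 0" using bl b0 u0 by (simp add: mult_neg_pos)
    have "(\<alpha>\<^sup>2 - u\<^sup>2) * (\<beta>\<^sup>2 - u\<^sup>2) < 0" using a2 b2 by (simp add: mult_pos_neg)
    thus False using gineq prodpos by linarith
  qed
  have abpos: "(\<alpha> - u) * (\<beta> - u) \<ge> 0" using au bu by simp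
  have key1: "hyp_pmf n i k (c + Suc l) * ((\<gamma> + u) * (\<delta> + u)) * ((\<gamma> - u) * (\<delta> - u))
      \<ge> hyp_pmf n i k (c - 1 - l) * ((\<gamma> - u) * (\<delta> - u)) * ((\<alpha> - u) * (\<beta> - u))"
  proof -
    have "hyp_pmf n i k (c + Suc l) * ((\<gamma> + u) * (\<delta> + u)) * ((\<gamma> - u) * (\<delta> - u))
        = hyp_pmf n i k (c + l) * ((\<alpha> - u) * (\<beta> - u)) * ((\<gamma> - u) * (\<delta> - u))" using rR' by simp
    also have "\<dots> \<ge> hyp_pmf n i k (c - 1 - l) * ((\<alpha> - u) * (\<beta> - u)) * ((\<gamma> - u) * (\<delta> - u))"
      using IH abpos pos1 by (intro mult_right_mono) (auto intro: mult_right_mono)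
    finally show ?thesis by (simp add: algebra_simps)
  qed
  also have "hyp_pmf n i k (c - 1 - l) * ((\<gamma> - u) * (\<delta> - u)) * ((\<alpha> - u) * (\<beta> - u))
      = hyp_pmf n i k (c - 1 - Suc l) * ((\<alpha>\<^sup>2 - u\<^sup>2) * (\<beta>\<^sup>2 - u\<^sup>2))"
    using rL' by (simp add: power2_eq_square algebra_simps)
  finally have key2: "hyp_pmf n i k (c - 1 - Suc l) * ((\<alpha>\<^sup>2 - u\<^sup>2) * (\<beta>\<^sup>2 - u\<^sup>2))
      \<le> hyp_pmf n i k (c + Suc l) * ((\<gamma>\<^sup>2 - u\<^sup>2) * (\<delta>\<^sup>2 - u\<^sup>2))"
    by (simp add: power2_eq_square algebra_simps)
  have "hyp_pmf n i k (c - 1 - Suc l) * ((\<gamma>\<^sup>2 - u\<^sup>2) * (\<delta>\<^sup>2 - u\<^sup>2))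
      \<le> hyp_pmf n i k (c - 1 - Suc l) * ((\<alpha>\<^sup>2 - u\<^sup>2) * (\<beta>\<^sup>2 - u\<^sup>2))"
    using gineq hyp_nonneg by (rule mult_left_mono)
  with key2 have "hyp_pmf n i k (c - 1 - Suc l) * ((\<gamma>\<^sup>2 - u\<^sup>2) * (\<delta>\<^sup>2 - u\<^sup>2))
      \<le> hyp_pmf n i k (c + Suc l) * ((\<gamma>\<^sup>2 - u\<^sup>2) * (\<delta>\<^sup>2 - u\<^sup>2))" by linarith
  hence "hyp_pmf n i k (c - 1 - Suc l) \<le> hyp_pmf n i k (c + Suc l)"
    using prodpos by (rule mult_right_le_imp_le)
  thus ?case by simp
qed

lemma fail_ineq:
  fixes \<alpha> \<beta> \<gamma> \<delta> v :: real
  assumes g0: "\<gamma> > 0" and ag: "\<gamma> \<le> \<alpha>" and d0: "\<delta> > 0" and v0: "v \<ge> 0"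
    and vg: "v < \<gamma>" and vd: "v < \<delta>" and D0: "\<alpha> * \<beta> - \<gamma> * \<delta> \<ge> \<alpha>" and b0: "\<beta> \<ge> 0"
    and fail: "\<not> ((\<gamma>\<^sup>2 - v\<^sup>2) * (\<delta>\<^sup>2 - v\<^sup>2) \<le> (\<alpha>\<^sup>2 - v\<^sup>2) * (\<beta>\<^sup>2 - v\<^sup>2))"
  shows "(v - 1) * ((\<alpha> + v) * (\<beta> + v) - (\<gamma> - v) * (\<delta> - v)) > 2 * ((\<gamma> - v) * (\<delta> - v))"
proof -
  define x where "x = v\<^sup>2"
  have a0: "\<alpha> > 0" using g0 ag by simp
  have gd: "\<gamma> * \<delta> > 0" using g0 d0 by simp
  have ab: "\<alpha> * \<beta> \<ge> \<gamma> * \<delta> + \<alpha>" using D0 by simp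
  have ab2: "(\<alpha> * \<beta>)\<^sup>2 \<ge> (\<gamma> * \<delta> + \<alpha>)\<^sup>2"
    using ab gd a0 by (intro power_mono) auto
  have x0: "x \<ge> 0" by (simp add: x_def)
  have A: "\<alpha> * (x - 1) > 2 * (\<gamma> * \<delta>)"
  proof (cases "\<beta>\<^sup>2 \<le> x")
    case True
    have "\<alpha>\<^sup>2 * x \<ge> \<alpha>\<^sup>2 * \<beta>\<^sup>2" using True by (simp add: mult_left_mono)
    also have "\<alpha>\<^sup>2 * \<beta>\<^sup>2 = (\<alpha> * \<beta>)\<^sup>2" by (simp add: power_mult_distrib)
    finally have "\<alpha>\<^sup>2 * x \<ge> (\<gamma> * \<delta> + \<alpha>)\<^sup>2" using ab2 by linarith
    hence "\<alpha>\<^sup>2 * x \<ge> (\<gamma> * \<delta>)\<^sup>2 + 2 * \<alpha> * (\<gamma> * \<delta>) + \<alpha>\<^sup>2" by (simp add: power2_eq_square algebra_simps)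
    moreover have "(\<gamma> * \<delta>)\<^sup>2 > 0" using mult_pos_pos[OF gd gd] by (simp add: power2_eq_square)
    ultimately have "\<alpha> * (\<alpha> * (x - 1)) > \<alpha> * (2 * (\<gamma> * \<delta>))" by (simp add: power2_eq_square algebra_simps)
    thus ?thesis using a0 by simp
  next
    case False
    have xg: "x < \<gamma>\<^sup>2" unfolding x_def using vg v0 by (simp add: power_strict_mono)
    have xd: "x < \<delta>\<^sup>2" unfolding x_def using vd v0 by (simp add: power_strict_mono)
    have xa: "x < \<alpha>\<^sup>2" using xg ag g0 by (smt (verit) power_mono)
    have f: "(\<alpha>\<^sup>2 - x) * (\<beta>\<^sup>2 - x) < (\<gamma>\<^sup>2 - x) * (\<delta>\<^sup>2 - x)" using fail by (simp add: x_def)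
    have s1: "\<alpha>\<^sup>2 * (\<gamma>\<^sup>2 - x) \<le> \<gamma>\<^sup>2 * (\<alpha>\<^sup>2 - x)"
    proof -
      have "\<gamma>\<^sup>2 \<le> \<alpha>\<^sup>2" using ag g0 by (simp add: power_mono)
      hence "\<gamma>\<^sup>2 * x \<le> \<alpha>\<^sup>2 * x" using x0 by (simp add: mult_right_mono)
      thus ?thesis by (simp add: algebra_simps)
    qed
    have "\<alpha>\<^sup>2 * ((\<alpha>\<^sup>2 - x) * (\<beta>\<^sup>2 - x)) < \<alpha>\<^sup>2 * ((\<gamma>\<^sup>2 - x) * (\<delta>\<^sup>2 - x))"
      using f a0 by simp
    also have "\<dots> = (\<alpha>\<^sup>2 * (\<gamma>\<^sup>2 - x)) * (\<delta>\<^sup>2 - x)" by simp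
    also have "\<dots> \<le> (\<gamma>\<^sup>2 * (\<alpha>\<^sup>2 - x)) * (\<delta>\<^sup>2 - x)"
      using s1 xd by (simp add: mult_right_mono)
    also have "\<dots> \<le> (\<gamma>\<^sup>2 * (\<alpha>\<^sup>2 - x)) * \<delta>\<^sup>2"
      using xa x0 by (simp add: mult_left_mono)
    finally have "(\<alpha>\<^sup>2 - x) * (\<alpha>\<^sup>2 * (\<beta>\<^sup>2 - x)) < (\<alpha>\<^sup>2 - x) * (\<gamma>\<^sup>2 * \<delta>\<^sup>2)"
      by (simp add: algebra_simps)
    hence "\<alpha>\<^sup>2 * (\<beta>\<^sup>2 - x) < \<gamma>\<^sup>2 * \<delta>\<^sup>2" using xa by (simp add: mult_less_cancel_left_pos)
    hence "(\<alpha> * \<beta>)\<^sup>2 < (\<gamma> * \<delta>)\<^sup>2 + \<alpha>\<^sup>2 * x" by (simp add: power_mult_distrib algebra_simps)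
    hence "(\<gamma> * \<delta> + \<alpha>)\<^sup>2 < (\<gamma> * \<delta>)\<^sup>2 + \<alpha>\<^sup>2 * x" using ab2 by linarith
    hence "\<alpha> * (\<alpha> * (x - 1)) > \<alpha> * (2 * (\<gamma> * \<delta>))" by (simp add: power2_eq_square algebra_simps)
    thus ?thesis using a0 by simp
  qed
  have B: "(\<alpha> + v) * (\<beta> + v) - (\<gamma> - v) * (\<delta> - v) \<ge> \<alpha> * (1 + v)"
  proof -
    have "(\<alpha> + v) * (\<beta> + v) - (\<gamma> - v) * (\<delta> - v) = (\<alpha> * \<beta> - \<gamma> * \<delta>) + v * \<alpha> + v * (\<beta> + \<gamma> + \<delta>)"
      by (simp add: algebra_simps)
    moreover have "v * (\<beta> + \<gamma> + \<delta>) \<ge> 0" using v0 b0 g0 d0 by simp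
    ultimately show ?thesis using D0 by (simp add: algebra_simps)
  qed
  have v1: "v \<ge> 1"
  proof (rule ccontr)
    assume "\<not> v \<ge> 1"
    hence "x \<le> 1" unfolding x_def using v0 by (simp add: power_le_one)
    hence "\<alpha> * (x - 1) \<le> 0" using a0 by (simp add: mult_nonneg_nonpos)
    thus False using A gd by linarith
  qed
  have C: "(\<gamma> - v) * (\<delta> - v) \<le> \<gamma> * \<delta>"
  proof -
    have "(\<gamma> - v) * (\<delta> - v) = \<gamma> * \<delta> - v * (\<gamma> + \<delta> - v)" by (simp add: algebra_simps)
    moreover have "v * (\<gamma> + \<delta> - v) \<ge> 0" using v0 vg d0 by simp
    ultimately show ?thesis by simp
  qed
  have "(v - 1) * ((\<alpha> + v) * (\<beta> + v) - (\<gamma> - v) * (\<delta> - v)) \<ge> (v - 1) * (\<alpha> * (1 + v))"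
    using B v1 by (simp add: mult_left_mono)
  also have "(v - 1) * (\<alpha> * (1 + v)) = \<alpha> * (x - 1)" by (simp add: x_def power2_eq_square algebra_simps)
  finally show ?thesis using A C by linarith
qed

lemma tail_sum:
  fixes f :: "nat \<Rightarrow> real"
  assumes "\<And>j. f j \<ge> 0" and "\<And>j. j < s \<Longrightarrow> \<rho> * f j \<le> f (Suc j)"
  shows "(\<rho> - 1) * (\<Sum>j<s. f j) \<le> f s"
proof -
  have "\<rho> * (\<Sum>j<s. f j) = (\<Sum>j<s. \<rho> * f j)" by (simp add: sum_distrib_left)
  also have "\<dots> \<le> (\<Sum>j<s. f (Suc j))" using assms(2) by (intro sum_mono) auto
  finally have 1: "\<rho> * (\<Sum>j<s. f j) \<le> (\<Sum>j<s. f (Suc j))" .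
  have 2: "(\<Sum>j<Suc s. f j) = f 0 + (\<Sum>j<s. f (Suc j))" by (rule sum.lessThan_Suc_shift)
  have 3: "(\<Sum>j<Suc s. f j) = (\<Sum>j<s. f j) + f s" by simp
  show ?thesis using 1 2 3 assms(1)[of 0] by (simp add: algebra_simps)
qed

lemma ratio_lower:
  fixes n i k j J :: nat
  assumes iN: "i \<le> n" and jJ: "j \<le> J" and iJ: "J \<le> i" and kJ: "J \<le> k"
    and dpos: "real n - real i - real k + real J + 1 > 0"
  shows "(real i - real J) * (real k - real J) / ((real J + 1) * (real n - real i - real k + real J + 1))
           * hyp_pmf n i k j \<le> hyp_pmf n i k (Suc j)"
proof (cases "real n - real i - real k + real j + 1 \<le> 0")
  case True
  hence "hyp_pmf n i k j = 0" by (rule hyp_low_zero[OF iN])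
  thus ?thesis using hyp_nonneg by simp
next
  case False
  define Dj where "Dj = (real j + 1) * (real n - real i - real k + real j + 1)"
  define Xj where "Xj = (real i - real j) * (real k - real j)"
  define DJ where "DJ = (real J + 1) * (real n - real i - real k + real J + 1)"
  define XJ where "XJ = (real i - real J) * (real k - real J)"
  have Dj0: "Dj > 0" using False by (simp add: Dj_def)
  have DJ0: "DJ > 0" using dpos by (simp add: DJ_def)
  have XJ0: "XJ \<ge> 0" using iJ kJ by (simp add: XJ_def)
  have XX: "XJ \<le> Xj" unfolding XJ_def Xj_def using jJ iJ kJ by (intro mult_mono) auto
  have DD: "Dj \<le> DJ" unfolding Dj_def DJ_def using jJ False by (intro mult_mono) auto
  have r: "hyp_pmf n i k (Suc j) * Dj = hyp_pmf n i k j * Xj"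
    using hyp_ratio[OF iN, of k j] by (simp add: Dj_def Xj_def algebra_simps)
  have "XJ * Dj \<le> Xj * DJ" using XX DD XJ0 Dj0 by (intro mult_mono) auto
  hence q: "XJ / DJ \<le> Xj / Dj" using Dj0 DJ0 by (simp add: divide_simps)
  have "XJ / DJ * hyp_pmf n i k j \<le> Xj / Dj * hyp_pmf n i k j"
    using q hyp_nonneg by (rule mult_right_mono)
  also have "\<dots> = hyp_pmf n i k (Suc j)" using r Dj0 by (simp add: field_simps)
  finally show ?thesis by (simp add: XJ_def DJ_def)
qed

lemma hyp_decr:
  fixes n i k c j :: nat
  assumes iN: "i \<le> n" and hi: "real i * real k \<le> (real c + 1) * real n"
    and loc: "i + k + 1 \<le> n + c" and jc: "c + 1 \<le> j"
  shows "hyp_pmf n i k (Suc j) \<le> hyp_pmf n i k j"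
proof -
  define Dj where "Dj = (real j + 1) * (real n - real i - real k + real j + 1)"
  define Xj where "Xj = (real i - real j) * (real k - real j)"
  have "real (i + k + 1) \<le> real (n + c)" using loc by (simp only: of_nat_le_iff)
  hence loc': "real i + real k + 1 \<le> real n + real c" by simp
  have "real (c + 1) \<le> real j" using jc by (simp only: of_nat_le_iff)
  hence jc': "real c + 1 \<le> real j" by simp
  have Dj0: "Dj > 0" unfolding Dj_def using loc' jc' by (intro mult_pos_pos) auto
  have "Dj - Xj = (real j + 1) * real n - (real i + real k) + 2 * real j + 1 - real i * real k"
    by (simp add: Dj_def Xj_def algebra_simps)
  also have "\<dots> \<ge> (real j + 1) * real n - (real i + real k) + 2 * real j + 1 - (real c + 1) * real n"
    using hi by simp
  finally have "Dj - Xj \<ge> (real j - real c) * real n - (real i + real k) + 2 * real j + 1"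
    by (simp add: algebra_simps)
  moreover have "(real j - real c) * real n \<ge> real n" using jc' by (simp add: mult_right_mono[of 1 "real j - real c" "real n", simplified])
  ultimately have XD: "Xj \<le> Dj" using loc' jc' by linarith
  have r: "hyp_pmf n i k (Suc j) * Dj = hyp_pmf n i k j * Xj"
    using hyp_ratio[OF iN, of k j] by (simp add: Dj_def Xj_def algebra_simps)
  have "hyp_pmf n i k (Suc j) * Dj \<le> hyp_pmf n i k j * Dj"
    using r XD hyp_nonneg by (simp add: mult_left_mono)
  thus ?thesis using Dj0 by (rule mult_right_le_imp_le)
qed

lemma good_beta:
  fixes \<alpha> \<beta> \<gamma> \<delta> u :: real
  assumes "0 < u" "u < \<gamma>" "\<gamma> \<le> \<alpha>" "u < \<delta>" "0 \<le> \<beta>"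
    and ineq: "(\<gamma>\<^sup>2 - u\<^sup>2) * (\<delta>\<^sup>2 - u\<^sup>2) \<le> (\<alpha>\<^sup>2 - u\<^sup>2) * (\<beta>\<^sup>2 - u\<^sup>2)"
  shows "u < \<beta>"
proof (rule ccontr)
  assume "\<not> u < \<beta>"
  hence bl: "\<beta> \<le> u" by simp
  have "\<gamma>\<^sup>2 - u\<^sup>2 = (\<gamma> - u) * (\<gamma> + u)" by (simp add: power2_eq_square algebra_simps)
  moreover have "\<delta>\<^sup>2 - u\<^sup>2 = (\<delta> - u) * (\<delta> + u)" by (simp add: power2_eq_square algebra_simps)
  ultimately have p: "(\<gamma>\<^sup>2 - u\<^sup>2) * (\<delta>\<^sup>2 - u\<^sup>2) > 0" using assms by (simp add: mult_pos_pos)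
  have "\<alpha>\<^sup>2 - u\<^sup>2 = (\<alpha> - u) * (\<alpha> + u)" by (simp add: power2_eq_square algebra_simps)
  hence a2: "\<alpha>\<^sup>2 - u\<^sup>2 > 0" using assms by simp
  have "\<beta>\<^sup>2 - u\<^sup>2 = (\<beta> - u) * (\<beta> + u)" by (simp add: power2_eq_square algebra_simps)
  hence b2: "\<beta>\<^sup>2 - u\<^sup>2 \<le> 0" using bl assms by (simp add: mult_nonpos_nonneg)
  have "(\<alpha>\<^sup>2 - u\<^sup>2) * (\<beta>\<^sup>2 - u\<^sup>2) \<le> 0" using a2 b2 by (simp add: mult_nonneg_nonpos)
  thus False using ineq p by linarith
qed

lemma pc_bound:
  fixes n i k c :: nat
  assumes iN: "i \<le> n" and nk: "8 * k \<le> n" and lo: "real c * real n + 1 \<le> real i * real k"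
    and ck: "c < k" and c1: "1 \<le> c"
  shows "hyp_pmf n i k c \<le> 2 * hyp_pmf n i k (Suc c)"
proof -
  have r: "hyp_pmf n i k (Suc c) * ((real c + 1) * (real n - real i - real k + real c + 1))
          = hyp_pmf n i k c * ((real i - real c) * (real k - real c))"
    using hyp_ratio[OF iN, of k c] by (simp add: algebra_simps)
  have p0: "hyp_pmf n i k c \<ge> 0" "hyp_pmf n i k (Suc c) \<ge> 0" by (rule hyp_nonneg)+
  consider (a) "n + c + 1 \<le> i + k" | (b) "i + k = n + c" | (c) "i + k + 1 \<le> n + c" by linarith
  thus ?thesis
  proof cases
    case a
    have "real (n + c + 1) \<le> real (i + k)" using a by (simp only: of_nat_le_iff)
    hence "real n - real i - real k + real c + 1 \<le> 0" by simp
    hence "hyp_pmf n i k c = 0" by (rule hyp_low_zero[OF iN])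
    thus ?thesis using p0 by simp
  next
    case b
    have "real (i + k) = real (n + c)" using b by simp
    hence bb: "real i + real k = real n + real c" by simp
    have e: "real n - real i - real k + real c + 1 = 1" using bb by simp
    have ic: "real i - real c = real n - real k" using bb by simp
    have "real (c + 1) \<le> real k" using ck by (simp only: of_nat_le_iff Suc_eq_plus1[symmetric] Suc_le_eq)
    hence k1: "real k - real c \<ge> 1" by simp
    have "real (8 * k) \<le> real n" using nk by (simp only: of_nat_le_iff)
    hence "real n - real k \<ge> 7 * real k" by simp
    moreover have "real c + 1 \<le> real k" using k1 by simp
    ultimately have "(real c + 1) / 2 \<le> (real i - real c) * (real k - real c)"
    proof -
      assume h1: "real n - real k \<ge> 7 * real k" and h2: "real c + 1 \<le> real k"
      define P where "P = (real i - real c) * (real k - real c)"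
      have F0: "(real i - real c) * 1 \<le> (real i - real c) * (real k - real c)"
        using ic k1 h1 by (intro mult_left_mono) auto
      hence F: "real i - real c \<le> P" by (simp add: P_def)
      have c0: "real c \<ge> 0" by simp
      have "real c + 1 \<le> 2 * P" using F c0 ic h1 h2 by linarith
      hence "(real c + 1) / 2 \<le> P" by simp
      thus ?thesis by (simp add: P_def)
    qed
    hence "hyp_pmf n i k c * ((real c + 1) / 2) \<le> hyp_pmf n i k c * ((real i - real c) * (real k - real c))"
      by (rule mult_left_mono[OF _ p0(1)])
    also have "\<dots> = hyp_pmf n i k (Suc c) * (real c + 1)" using r e by simp
    finally have "hyp_pmf n i k c * (real c + 1) \<le> (2 * hyp_pmf n i k (Suc c)) * (real c + 1)"
      by (simp add: field_simps)
    moreover have "real c + 1 > 0" by simp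
    ultimately show ?thesis by (rule mult_right_le_imp_le)
  next
    case c
    have "real (i + k + 1) \<le> real (n + c)" using c by (simp only: of_nat_le_iff)
    hence d1: "real n - real i - real k + real c \<ge> 1" by simp
    have "2 * ((real i - real c) * (real k - real c)) = 2 * (real i * real k) - 2 * real c * (real i + real k) + 2 * (real c)\<^sup>2"
      by (simp add: power2_eq_square algebra_simps)
    also have "\<dots> \<ge> 2 * (real c * real n + 1) - 2 * real c * (real i + real k) + 2 * (real c)\<^sup>2" using lo by simp
    finally have q: "2 * ((real i - real c) * (real k - real c)) - (real c + 1) * (real n - real i - real k + real c + 1)
          \<ge> (real c - 1) * (real n - real i - real k + real c - 1)"
      by (simp add: power2_eq_square algebra_simps)
    have "(real c - 1) * (real n - real i - real k + real c - 1) \<ge> 0" using d1 c1 by simp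
    hence q2: "(real c + 1) * (real n - real i - real k + real c + 1) \<le> 2 * ((real i - real c) * (real k - real c))"
      using q by linarith
    have Dpos: "(real c + 1) * (real n - real i - real k + real c + 1) > 0" using d1 by (simp add: add_pos_pos)
    have "hyp_pmf n i k c * ((real c + 1) * (real n - real i - real k + real c + 1))
        \<le> hyp_pmf n i k c * (2 * ((real i - real c) * (real k - real c)))" using q2 p0 by (simp add: mult_left_mono)
    also have "\<dots> = 2 * hyp_pmf n i k (Suc c) * ((real c + 1) * (real n - real i - real k + real c + 1))"
      using r by simp
    finally show ?thesis using Dpos by (simp add: mult_le_cancel_right_pos)
  qed
qed

lemma decr_chain:
  fixes n i k c :: nat
  assumes iN: "i \<le> n" and hi: "real i * real k \<le> (real c + 1) * real n"
    and loc: "i + k + 1 \<le> n + c" and l1: "1 \<le> l"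
  shows "hyp_pmf n i k (c + l + d) \<le> hyp_pmf n i k (c + l)"
proof (induction d)
  case 0 show ?case by simp
next
  case (Suc d)
  have "hyp_pmf n i k (Suc (c + l + d)) \<le> hyp_pmf n i k (c + l + d)"
    by (rule hyp_decr[OF iN hi loc]) (use l1 in simp)
  thus ?case using Suc.IH by simp
qed

lemma main_case:
  fixes n i k c :: nat
  assumes iN: "i \<le> n" and kpos: "0 < k" and nk: "8 * k \<le> n" and c1: "1 \<le> c"
    and lo: "c * n < i * k" and hi: "i * k \<le> (c + 1) * n"
  shows "2 / 15 \<le> (\<Sum>j\<in>{Suc c..<Suc k}. hyp_pmf n i k j)"
proof -
  let ?p = "hyp_pmf n i k"
  have pnn: "\<And>j. ?p j \<ge> 0" by (rule hyp_nonneg)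
  have loR: "real c * real n + 1 \<le> real i * real k"
  proof -
    have "c * n + 1 \<le> i * k" using lo by simp
    hence "real (c * n + 1) \<le> real (i * k)" by (simp only: of_nat_le_iff)
    thus ?thesis by simp
  qed
  have hiR: "real i * real k \<le> (real c + 1) * real n"
  proof -
    have "real (i * k) \<le> real ((c + 1) * n)" using hi by (simp only: of_nat_le_iff)
    thus ?thesis by (simp add: algebra_simps)
  qed
  have ck: "c < k"
  proof (rule ccontr)
    assume "\<not> c < k"
    hence "k \<le> c" by simp
    hence h1: "k * n \<le> c * n" by simp
    have h2: "i * k \<le> n * k" using iN by simp
    have h3: "n * k = k * n" by (simp add: mult.commute)
    show False using h1 h2 h3 lo by linarith
  qed
  have kn: "k \<le> n" using nk by simp
  have i8: "8 * c < i"
  proof -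
    have h1: "c * (8 * k) \<le> c * n" using nk by (rule mult_le_mono2)
    have h2: "(8 * c) * k = c * (8 * k)" by simp
    have "(8 * c) * k < i * k" using h1 h2 lo by linarith
    thus ?thesis using kpos by simp
  qed
  define \<alpha> where "\<alpha> = real i - real c + 1"
  define \<beta> where "\<beta> = real k - real c + 1"
  define \<gamma> where "\<gamma> = real c"
  define \<delta> where "\<delta> = real n - real i - real k + real c"
  have D0: "\<alpha> * \<beta> - \<gamma> * \<delta> \<ge> \<alpha>"
  proof -
    have "\<alpha> * \<beta> - \<gamma> * \<delta> = real i * real k - real c * real n + \<alpha> + \<beta> - 1"
      by (simp add: \<alpha>_def \<beta>_def \<gamma>_def \<delta>_def algebra_simps)
    moreover have "\<beta> \<ge> 0" using ck by (simp add: \<beta>_def)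
    ultimately show ?thesis using loR by linarith
  qed
  have D0': "\<gamma> * \<delta> \<le> \<alpha> * \<beta>"
  proof -
    have "\<alpha> \<ge> 0" using i8 by (simp add: \<alpha>_def)
    thus ?thesis using D0 by linarith
  qed
  have ag: "\<gamma> \<le> \<alpha>"
  proof -
    have "real (8 * c) < real i" using i8 by (simp only: of_nat_less_iff)
    thus ?thesis by (simp add: \<alpha>_def \<gamma>_def)
  qed
  have g0: "\<gamma> > 0" using c1 by (simp add: \<gamma>_def)
  have b0: "\<beta> \<ge> 0" using ck by (simp add: \<beta>_def)
  define A where "A = (\<Sum>j\<in>{c..<Suc k}. ?p j)"
  define B where "B = (\<Sum>j\<in>{0..<c}. ?p j)"
  define R where "R = (\<Sum>j\<in>{Suc c..<Suc k}. ?p j)"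
  have AB: "A + B = 1"
  proof -
    have "(\<Sum>j\<le>k. ?p j) = 1" by (rule hyp_sum[OF iN kn])
    moreover have "{..k} = {0..<Suc k}" by auto
    ultimately have "(\<Sum>j\<in>{0..<Suc k}. ?p j) = 1" by simp
    moreover have "(\<Sum>j\<in>{0..<c}. ?p j) + (\<Sum>j\<in>{c..<Suc k}. ?p j) = (\<Sum>j\<in>{0..<Suc k}. ?p j)"
      by (rule sum.atLeastLessThan_concat) (use ck in auto)
    ultimately show ?thesis by (simp add: A_def B_def)
  qed
  have AR: "A = ?p c + R"
  proof -
    have "(\<Sum>j\<in>{c..<Suc c}. ?p j) + (\<Sum>j\<in>{Suc c..<Suc k}. ?p j) = (\<Sum>j\<in>{c..<Suc k}. ?p j)"
      by (rule sum.atLeastLessThan_concat) (use ck in auto)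
    thus ?thesis by (simp add: A_def R_def)
  qed
  have Rge: "?p (Suc c) \<le> R"
  proof -
    have "Suc c \<in> {Suc c..<Suc k}" using ck by simp
    thus ?thesis unfolding R_def using pnn by (intro member_le_sum) auto
  qed
  have pc: "?p c \<le> 2 * ?p (Suc c)" by (rule pc_bound[OF iN nk loR ck c1])
  have A3: "A \<le> 3 * R" using AR Rge pc by linarith
  define good where "good u \<longleftrightarrow> real u < \<delta> \<and> (\<gamma>\<^sup>2 - (real u)\<^sup>2) * (\<delta>\<^sup>2 - (real u)\<^sup>2) \<le> (\<alpha>\<^sup>2 - (real u)\<^sup>2) * (\<beta>\<^sup>2 - (real u)\<^sup>2)" for u :: nat
  define S where "S = {l. l \<le> c - 1 \<and> (\<forall>u\<in>{1..l}. good u)}"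
  have finS: "finite S" unfolding S_def by (rule finite_subset[of _ "{..c - 1}"]) auto
  have S0: "0 \<in> S" unfolding S_def by simp
  define L where "L = Max S"
  have LS: "L \<in> S" unfolding L_def using finS S0 by (intro Max_in) auto
  have Lc: "L \<le> c - 1" and Lgood: "\<forall>u\<in>{1..L}. good u" using LS by (auto simp: S_def)
  have Lmax: "\<And>l. l \<in> S \<Longrightarrow> l \<le> L" unfolding L_def using finS by (intro Max_ge) auto
  have pair: "\<And>l. l \<le> L \<Longrightarrow> ?p (c - 1 - l) \<le> ?p (c + l)"
  proof -
    fix l assume lL: "l \<le> L"
    have g: "\<forall>u\<in>{1..l}. good u" using Lgood lL by auto
    show "?p (c - 1 - l) \<le> ?p (c + l)"
      using pairing[of i n c k l] iN c1 ck D0' ag lL Lc g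
      unfolding \<alpha>_def \<beta>_def \<gamma>_def \<delta>_def good_def by auto
  qed
  have cL: "c + L \<le> k"
  proof (cases "L = 0")
    case True thus ?thesis using ck by simp
  next
    case False
    have gL: "good L" using Lgood False by auto
    have "real L < \<beta>"
    proof (rule good_beta[of "real L" \<gamma> \<alpha> \<delta> \<beta>])
      show "0 < real L" using False by simp
      show "real L < \<gamma>" using Lc c1 unfolding \<gamma>_def by linarith
      show "\<gamma> \<le> \<alpha>" by (rule ag)
      show "real L < \<delta>" using gL by (simp add: good_def)
      show "0 \<le> \<beta>" by (rule b0)
      show "(\<gamma>\<^sup>2 - (real L)\<^sup>2) * (\<delta>\<^sup>2 - (real L)\<^sup>2) \<le> (\<alpha>\<^sup>2 - (real L)\<^sup>2) * (\<beta>\<^sup>2 - (real L)\<^sup>2)"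
        using gL by (simp add: good_def)
    qed
    hence "real (c + L) < real (k + 1)" using ck by (simp add: \<beta>_def)
    hence "c + L < k + 1" by (simp only: of_nat_less_iff)
    thus ?thesis by simp
  qed
  define s where "s = c - 1 - L"
  have cs: "c = s + Suc L" using Lc c1 by (simp add: s_def)
  define T where "T = (\<Sum>j\<in>{0..<s}. ?p j)"
  have T0: "T \<ge> 0" unfolding T_def using pnn by (intro sum_nonneg) auto
  have Bsplit: "B = T + (\<Sum>j\<in>{s..<c}. ?p j)"
  proof -
    have "(\<Sum>j\<in>{0..<s}. ?p j) + (\<Sum>j\<in>{s..<c}. ?p j) = (\<Sum>j\<in>{0..<c}. ?p j)"
      by (rule sum.atLeastLessThan_concat) (use cs in auto)
    thus ?thesis by (simp add: B_def T_def)
  qed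
  have paired: "(\<Sum>j\<in>{s..<c}. ?p j) \<le> A"
  proof -
    have "(\<Sum>j\<in>{s..<c}. ?p j) = (\<Sum>j\<in>{0 + s..<Suc L + s}. ?p j)" using cs by (simp add: add.commute)
    also have "\<dots> = (\<Sum>i\<in>{0..<Suc L}. ?p (i + s))" by (rule sum.shift_bounds_nat_ivl)
    also have "\<dots> = (\<Sum>i<Suc L. ?p (i + s))" by (simp add: atLeast0LessThan)
    also have "\<dots> = (\<Sum>i<Suc L. ?p ((Suc L - Suc i) + s))"
      by (rule sum.nat_diff_reindex[symmetric])
    also have "\<dots> \<le> (\<Sum>i<Suc L. ?p (c + i))"
    proof (rule sum_mono)
      fix i assume "i \<in> {..<Suc L}"
      hence iL: "i \<le> L" by simp
      have "(Suc L - Suc i) + s = c - 1 - i" using iL cs by simp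
      thus "?p ((Suc L - Suc i) + s) \<le> ?p (c + i)" using pair[OF iL] by simp
    qed
    also have "\<dots> = (\<Sum>i\<in>{0..<Suc L}. ?p (i + c))" by (simp add: atLeast0LessThan add.commute)
    also have "\<dots> = (\<Sum>j\<in>{0 + c..<Suc L + c}. ?p j)" by (rule sum.shift_bounds_nat_ivl[symmetric])
    also have "\<dots> \<le> A"
    proof -
      have "(\<Sum>j\<in>{c..<c + Suc L}. ?p j) + (\<Sum>j\<in>{c + Suc L..<Suc k}. ?p j) = (\<Sum>j\<in>{c..<Suc k}. ?p j)"
        by (rule sum.atLeastLessThan_concat) (use cL in auto)
      moreover have "(\<Sum>j\<in>{c + Suc L..<Suc k}. ?p j) \<ge> 0" using pnn by (intro sum_nonneg) auto
      ultimately show ?thesis by (simp add: A_def add.commute)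
    qed
    finally show ?thesis .
  qed
  have BTA: "B \<le> T + A" using Bsplit paired by linarith
  have tail: "2 * T \<le> A"
  proof (cases "L = c - 1")
    case True
    hence "s = 0" by (simp add: s_def)
    hence "T = 0" by (simp add: T_def)
    moreover have "A \<ge> 0" unfolding A_def using pnn by (intro sum_nonneg) auto
    ultimately show ?thesis by simp
  next
    case False
    hence SLc: "Suc L \<le> c - 1" using Lc by simp
    have ngood: "\<not> good (Suc L)"
    proof
      assume "good (Suc L)"
      hence "\<forall>u\<in>{1..Suc L}. good u" using Lgood by (auto simp: le_Suc_eq)
      hence "Suc L \<in> S" using SLc by (simp add: S_def)
      thus False using Lmax by fastforce
    qed
    define v where "v = real (Suc L)"
    have vL: "v = real L + 1" by (simp add: v_def)
    have realc: "real c = real s + v" using cs by (simp add: v_def)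
    show ?thesis
    proof (cases "v < \<delta>")
      case False
      have "T = 0"
      proof -
        have "\<forall>j\<in>{0..<s}. ?p j = 0"
        proof
          fix j assume "j \<in> {0..<s}"
          hence "real j + 1 \<le> real s" by simp
          hence "real n - real i - real k + real j + 1 \<le> 0" using False realc by (simp add: \<delta>_def)
          thus "?p j = 0" by (rule hyp_low_zero[OF iN])
        qed
        thus ?thesis by (simp add: T_def)
      qed
      moreover have "A \<ge> 0" unfolding A_def using pnn by (intro sum_nonneg) auto
      ultimately show ?thesis by simp
    next
      case True
      have fail: "\<not> ((\<gamma>\<^sup>2 - v\<^sup>2) * (\<delta>\<^sup>2 - v\<^sup>2) \<le> (\<alpha>\<^sup>2 - v\<^sup>2) * (\<beta>\<^sup>2 - v\<^sup>2))"
        using ngood True by (simp add: good_def v_def)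
      have vg: "v < \<gamma>" using SLc c1 unfolding v_def \<gamma>_def by linarith
      have d0: "\<delta> > 0" using True by (simp add: v_def)
      have FI: "(v - 1) * ((\<alpha> + v) * (\<beta> + v) - (\<gamma> - v) * (\<delta> - v)) > 2 * ((\<gamma> - v) * (\<delta> - v))"
        by (rule fail_ineq[OF g0 ag d0 _ vg True D0 b0 fail]) (simp add: v_def)
      define Q where "Q = (\<gamma> - v) * (\<delta> - v)"
      have Q0: "Q > 0" using vg True by (simp add: Q_def)
      define \<rho> where "\<rho> = (\<alpha> + v) * (\<beta> + v) / Q"
      have rhoQ: "\<rho> * Q = (\<alpha> + v) * (\<beta> + v)" using Q0 by (simp add: \<rho>_def)
      have FI2: "real L * (\<rho> - 1) > 2"
      proof -
        have "(v - 1) * ((\<rho> - 1) * Q) > 2 * Q" using FI rhoQ by (simp add: Q_def algebra_simps)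
        hence "(real L * (\<rho> - 1)) * Q > 2 * Q" using vL by (simp add: algebra_simps)
        thus ?thesis using Q0 by (simp add: mult_less_cancel_right_pos)
      qed
      have s1: "s \<ge> 1" using SLc by (simp add: s_def)
      define J where "J = s - 1"
      have sJ: "s = Suc J" using s1 by (simp add: J_def)
      have RJ: "real J + 1 = real s" using sJ by simp
      have condT: "\<And>j. j < s \<Longrightarrow> \<rho> * ?p j \<le> ?p (Suc j)"
      proof -
        fix j assume js: "j < s"
        have Jc: "J < c" using cs sJ by simp
        have dposJ: "real n - real i - real k + real J + 1 > 0"
          using True realc RJ by (simp add: \<delta>_def)
        have eq: "(real i - real J) * (real k - real J) / ((real J + 1) * (real n - real i - real k + real J + 1)) = \<rho>"
        proof -
          have "real i - real J = \<alpha> + v" using realc RJ by (simp add: \<alpha>_def)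
          moreover have "real k - real J = \<beta> + v" using realc RJ by (simp add: \<beta>_def)
          moreover have "(real J + 1) * (real n - real i - real k + real J + 1) = Q"
          proof -
            have e1: "\<gamma> - v = real J + 1" using realc RJ by (simp add: \<gamma>_def)
            have e2: "\<delta> - v = real n - real i - real k + real J + 1" using realc RJ by (simp add: \<delta>_def)
            show ?thesis by (simp add: Q_def e1 e2)
          qed
          ultimately show ?thesis by (simp add: \<rho>_def)
        qed
        have "(real i - real J) * (real k - real J) / ((real J + 1) * (real n - real i - real k + real J + 1)) * ?p j \<le> ?p (Suc j)"
          by (rule ratio_lower[OF iN]) (use js sJ Jc i8 ck dposJ in auto)
        thus "\<rho> * ?p j \<le> ?p (Suc j)" using eq by simp
      qed
      have TS: "(\<rho> - 1) * T \<le> ?p s"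
        unfolding T_def atLeast0LessThan by (rule tail_sum[where f="hyp_pmf n i k", OF pnn condT])
      have ps: "?p s \<le> ?p (c + L)" using pair[of L] by (simp add: s_def)
      have loc: "i + k + 1 \<le> n + c"
      proof -
        have "real (i + k + 1) < real (n + c)" using True vL by (simp add: \<delta>_def)
        thus ?thesis by (simp only: of_nat_less_iff)
      qed
      have LA: "real L * ?p (c + L) \<le> A"
      proof -
        have "real L * ?p (c + L) = (\<Sum>l\<in>{1..<Suc L}. ?p (c + L))" by simp
        also have "\<dots> \<le> (\<Sum>l\<in>{1..<Suc L}. ?p (c + l))"
        proof (rule sum_mono)
          fix l assume "l \<in> {1..<Suc L}"
          hence l1: "1 \<le> l" and lL: "l \<le> L" by auto
          have "?p (c + l + (L - l)) \<le> ?p (c + l)" by (rule decr_chain[OF iN hiR loc l1])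
          thus "?p (c + L) \<le> ?p (c + l)" using lL by simp
        qed
        also have "\<dots> = (\<Sum>l\<in>{1..<Suc L}. ?p (l + c))" by (simp add: add.commute)
        also have "\<dots> = (\<Sum>j\<in>{1 + c..<Suc L + c}. ?p j)" by (rule sum.shift_bounds_nat_ivl[symmetric])
        also have "\<dots> \<le> A"
        proof -
          have "(\<Sum>j\<in>{c..<1 + c}. ?p j) + (\<Sum>j\<in>{1 + c..<Suc L + c}. ?p j) = (\<Sum>j\<in>{c..<Suc L + c}. ?p j)"
            by (rule sum.atLeastLessThan_concat) auto
          moreover have "(\<Sum>j\<in>{c..<Suc L + c}. ?p j) + (\<Sum>j\<in>{Suc L + c..<Suc k}. ?p j) = (\<Sum>j\<in>{c..<Suc k}. ?p j)"
            by (rule sum.atLeastLessThan_concat) (use cL in auto)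
          moreover have "(\<Sum>j\<in>{c..<1 + c}. ?p j) \<ge> 0" using pnn by (intro sum_nonneg) auto
          moreover have "(\<Sum>j\<in>{Suc L + c..<Suc k}. ?p j) \<ge> 0" using pnn by (intro sum_nonneg) auto
          ultimately show ?thesis by (simp add: A_def)
        qed
        finally show ?thesis .
      qed
      have L0: "real L \<ge> 0" by simp
      have "real L * ((\<rho> - 1) * T) \<le> real L * ?p s" using TS L0 by (rule mult_left_mono)
      also have "\<dots> \<le> real L * ?p (c + L)" using ps L0 by (rule mult_left_mono)
      also have "\<dots> \<le> A" by (rule LA)
      finally have "(real L * (\<rho> - 1)) * T \<le> A" by (simp add: algebra_simps)
      moreover have "2 * T \<le> (real L * (\<rho> - 1)) * T" using FI2 T0 by (intro mult_right_mono) auto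
      ultimately show ?thesis by linarith
    qed
  qed
  have "A \<ge> 2 / 5" using AB BTA tail by linarith
  thus ?thesis using A3 by (simp add: R_def)
qed



lemma choose_mono_upper: "a \<le> b \<Longrightarrow> a choose k \<le> b choose k"
proof (induction b)
  case 0 thus ?case by simp
next
  case (Suc b)
  show ?case
  proof (cases "a = Suc b")
    case True thus ?thesis by simp
  next
    case False
    hence "a \<le> b" using Suc.prems by simp
    hence "a choose k \<le> b choose k" by (rule Suc.IH)
    moreover have "b choose k \<le> Suc b choose k"
      by (cases k) simp_all
    ultimately show ?thesis by simp
  qed
qed

lemma case_t1:
  fixes n k i :: nat
  assumes kpos: "0 < k" and nk: "8 * k \<le> n" and i1: "1 \<le> i" and iN: "i \<le> n"
  shows "real k / real n \<le> (\<Sum>j\<in>{1..k}. hyp_pmf n i k j)"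
proof -
  have kn: "k \<le> n" using nk by simp
  have npos: "n > 0" using kpos nk by simp
  have tot: "(\<Sum>j\<le>k. hyp_pmf n i k j) = 1" by (rule hyp_sum[OF iN kn])
  have "{..k} = insert 0 {1..k}" by auto
  hence "(\<Sum>j\<le>k. hyp_pmf n i k j) = hyp_pmf n i k 0 + (\<Sum>j\<in>{1..k}. hyp_pmf n i k j)" by simp
  hence sp: "(\<Sum>j\<in>{1..k}. hyp_pmf n i k j) = 1 - hyp_pmf n i k 0" using tot by simp
  have p0: "hyp_pmf n i k 0 = real ((n - i) choose k) / real (n choose k)" by (simp add: hyp_pmf_def)
  have c1: "(n - i) choose k \<le> (n - 1) choose k" using i1 by (intro choose_mono_upper) simp
  have c2: "(n - k) * (n choose k) = n * ((n - 1) choose k)" by (rule binomial_absorb_comp)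
  have Cpos: "real (n choose k) > 0" using kn by simp
  have "real n * real ((n - i) choose k) \<le> real n * real ((n - 1) choose k)"
    using c1 by (simp add: mult_left_mono)
  also have "\<dots> = real (n - k) * real (n choose k)"
  proof -
    have "real (n * ((n - 1) choose k)) = real ((n - k) * (n choose k))" using c2 by simp
    thus ?thesis by simp
  qed
  finally have "real n * real ((n - i) choose k) \<le> (real n - real k) * real (n choose k)"
    using kn by (simp add: of_nat_diff)
  hence "real ((n - i) choose k) / real (n choose k) \<le> (real n - real k) / real n"
    using Cpos npos by (simp add: divide_simps algebra_simps)
  hence "hyp_pmf n i k 0 \<le> 1 - real k / real n" using npos p0 by (simp add: diff_divide_distrib)
  thus ?thesis using sp by simp
qed

theorem theorem1:
  fixes n k i :: nat
  assumes "0 < k" and "n \<ge> 8 * k" and "1 \<le> i" and "i \<le> n"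
  shows "hyp_prob_ge n i k (hyp_mean n i k) \<ge> real k / real n"
proof -
  have kpos: "0 < k" and nk: "8 * k \<le> n" and i1: "1 \<le> i" and iN: "i \<le> n" using assms by auto
  have npos: "n > 0" using kpos nk by simp
  define m where "m = real i * real k / real n"
  have mpos: "m > 0" using kpos i1 npos by (simp add: m_def)
  define t where "t = nat \<lceil>m\<rceil>"
  have cm: "\<lceil>m\<rceil> \<ge> 1" using mpos by (simp add: le_ceiling_iff)
  have tI: "int t = \<lceil>m\<rceil>" using cm by (simp add: t_def)
  have t1: "t \<ge> 1" using cm tI by linarith
  have hm: "hyp_mean n i k = m" by (simp add: hyp_mean_def m_def)
  have iff: "\<And>j::nat. (m \<le> real j) \<longleftrightarrow> (t \<le> j)"
  proof -
    fix j :: nat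
    have "(m \<le> real j) \<longleftrightarrow> (\<lceil>m\<rceil> \<le> int j)" by (simp add: ceiling_le_iff)
    also have "\<dots> \<longleftrightarrow> (int t \<le> int j)" by (simp add: tI)
    also have "\<dots> \<longleftrightarrow> (t \<le> j)" by simp
    finally show "(m \<le> real j) \<longleftrightarrow> (t \<le> j)" .
  qed
  have set_eq: "{j\<in>{0..k}. real j \<ge> hyp_mean n i k} = {t..k}"
  proof (rule set_eqI)
    fix j :: nat
    have "j \<in> {j\<in>{0..k}. real j \<ge> hyp_mean n i k} \<longleftrightarrow> j \<le> k \<and> m \<le> real j"
      unfolding hm by simp
    also have "\<dots> \<longleftrightarrow> j \<le> k \<and> t \<le> j" using iff[of j] by simp
    also have "\<dots> \<longleftrightarrow> j \<in> {t..k}" by auto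
    finally show "j \<in> {j\<in>{0..k}. real j \<ge> hyp_mean n i k} \<longleftrightarrow> j \<in> {t..k}" .
  qed
  have ge: "hyp_prob_ge n i k (hyp_mean n i k) = (\<Sum>j\<in>{t..k}. hyp_pmf n i k j)"
    unfolding hyp_prob_ge_def set_eq ..
  have kn8: "real k / real n \<le> 1 / 8"
  proof -
    have "real (8 * k) \<le> real n" using nk by (simp only: of_nat_le_iff)
    thus ?thesis using npos by (simp add: divide_simps)
  qed
  show ?thesis
  proof (cases "t = 1")
    case True
    thus ?thesis using ge case_t1[OF kpos nk i1 iN] by simp
  next
    case False
    define c where "c = t - 1"
    have c1: "1 \<le> c" using False t1 by (simp add: c_def)
    have tc: "t = Suc c" using t1 by (simp add: c_def)
    have mlo: "real c < m"
    proof -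
      have "int t - 1 < m" using tI ceiling_correct[of m] by simp
      thus ?thesis using tc by simp
    qed
    have mhi: "m \<le> real c + 1"
    proof -
      have e0: "\<lceil>m\<rceil> = int c + 1" using tI tc by simp
      have e: "(of_int \<lceil>m\<rceil> :: real) = real c + 1" unfolding e0 by simp
      have "m \<le> of_int \<lceil>m\<rceil>" by (rule le_of_int_ceiling)
      thus ?thesis using e by linarith
    qed
    have lo: "c * n < i * k"
    proof -
      have "real c * real n < real i * real k" using mlo npos by (simp add: m_def field_simps)
      hence "real (c * n) < real (i * k)" by simp
      thus ?thesis by (simp only: of_nat_less_iff)
    qed
    have hi: "i * k \<le> (c + 1) * n"
    proof -
      have "real i * real k \<le> (real c + 1) * real n" using mhi npos by (simp add: m_def field_simps)
      hence "real (i * k) \<le> real ((c + 1) * n)" by (simp add: algebra_simps)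
      thus ?thesis by (simp only: of_nat_le_iff)
    qed
    have "2 / 15 \<le> (\<Sum>j\<in>{Suc c..<Suc k}. hyp_pmf n i k j)"
      by (rule main_case[OF iN kpos nk c1 lo hi])
    moreover have "{Suc c..<Suc k} = {t..k}" using tc by auto
    ultimately have "2 / 15 \<le> hyp_prob_ge n i k (hyp_mean n i k)" using ge by simp
    thus ?thesis using kn8 by linarith
  qed
qed

end
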